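(* Let $k\ge 2$, $0<\alpha<1$, and let $G$ be a connected $k$-uniform hypergraph on $n\ge 2$ vertices with maximum degree $d_1$ and second maximum degree $d_2\ge 1$ (the first two entries of the degree sequence in non-increasing order). Then \[\rho_\alpha(G)\le \alpha d_1+(1-\alpha)d_1^{1/k}d_2^{1-1/k},\] with equality if and only if $G$ is regular.
   Context: Hypergraphs are finite with edges being sets; $k$-uniform means every edge has $k$ vertices; the degree of a vertex is the number of edges containing it; regular means all degrees are equal. $\mathcal A(G)$ is the order-$k$ dimension-$n$ tensor with $(i_1,\dots,i_k)$-entry $\frac1{(k-1)!}$ if $\{i_1,\dots,i_k\}\in E(G)$ and $0$ otherwise; $\mathcal D(G)$ is the diagonal tensor of degrees; $\mathcal A_\alpha(G)=\alpha\mathcal D(G)+(1-\alpha)\mathcal A(G)$. For an order-$k$ tensor $\mathcal T$, $(\mathcal Tx)_i=\sum_{i_2,\dots,i_k}\mathcal T_{ii_2\dots i_k}x_{i_2}\cdots x_{i_k}$, and $\lambda$ is an eigenvalue if $\mathcal Tx=\lambda x^{[k-1]}$ for some $x\ne0$, $x^{[k-1]}=(x_i^{k-1})_i$. $\rho_\alpha(G)$ is the largest modulus of an eigenvalue of $\mathcal A_\alpha(G)$. A path is an alternating sequence of distinct vertices and distinct edges $(v_0,e_1,v_1,\dots,e_s,v_s)$ with $v_{i-1},v_i\in e_i$; connected means any two vertices are joined by a path. *)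

theory Defs
  imports Complex_Main
begin

definition uniform_hypergraph :: "nat \<Rightarrow> nat \<Rightarrow> nat set set \<Rightarrow> bool" where
  "uniform_hypergraph n k E \<longleftrightarrow> (\<forall>e\<in>E. e \<subseteq> {0..<n} \<and> card e = k)"

definition degree :: "nat set set \<Rightarrow> nat \<Rightarrow> nat" where
  "degree E v = card {e\<in>E. v \<in> e}"

definition is_path :: "nat set set \<Rightarrow> nat list \<Rightarrow> nat set list \<Rightarrow> bool" where
  "is_path E vs es \<longleftrightarrow> length vs = length es + 1 \<and> distinct vs \<and> distinct es \<and>
     (\<forall>i<length es. es ! i \<in> E \<and> vs ! i \<in> es ! i \<and> vs ! (Suc i) \<in> es ! i)"

definition hg_connected :: "nat \<Rightarrow> nat set set \<Rightarrow> bool" where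
  "hg_connected n E \<longleftrightarrow> (\<forall>u<n. \<forall>v<n. \<exists>vs es. is_path E vs es \<and> hd vs = u \<and> last vs = v)"

definition hg_regular :: "nat \<Rightarrow> nat set set \<Rightarrow> bool" where
  "hg_regular n E \<longleftrightarrow> (\<forall>u<n. \<forall>v<n. degree E u = degree E v)"

definition degree_seq :: "nat \<Rightarrow> nat set set \<Rightarrow> nat list" where
  "degree_seq n E = rev (sort (map (degree E) [0..<n]))"

text \<open>Order-k dimension-n tensors are represented as functions T with
  T i is = T_{i, is!0, ..., is!(k-2)} for index lists is of length k-1.\<close>
type_synonym tensor = "nat \<Rightarrow> nat list \<Rightarrow> real"

definition adj_tensor :: "nat \<Rightarrow> nat set set \<Rightarrow> tensor" where
  "adj_tensor k E i is = (if set (i # is) \<in> E then 1 / fact (k - 1) else 0)"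

definition deg_tensor :: "nat \<Rightarrow> nat set set \<Rightarrow> tensor" where
  "deg_tensor k E i is = (if is = replicate (k - 1) i then real (degree E i) else 0)"

definition A_alpha :: "real \<Rightarrow> nat \<Rightarrow> nat set set \<Rightarrow> tensor" where
  "A_alpha \<alpha> k E i is = \<alpha> * deg_tensor k E i is + (1 - \<alpha>) * adj_tensor k E i is"

definition index_lists :: "nat \<Rightarrow> nat \<Rightarrow> nat list set" where
  "index_lists n m = {is. length is = m \<and> set is \<subseteq> {0..<n}}"

definition tensor_apply :: "nat \<Rightarrow> nat \<Rightarrow> tensor \<Rightarrow> (nat \<Rightarrow> complex) \<Rightarrow> nat \<Rightarrow> complex" where
  "tensor_apply n k T x i = (\<Sum>is\<in>index_lists n (k - 1). complex_of_real (T i is) * prod_list (map x is))"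

definition tensor_eigenvalue :: "nat \<Rightarrow> nat \<Rightarrow> tensor \<Rightarrow> complex \<Rightarrow> bool" where
  "tensor_eigenvalue n k T mu \<longleftrightarrow> (\<exists>x. (\<exists>i<n. x i \<noteq> 0) \<and>
      (\<forall>i<n. tensor_apply n k T x i = mu * x i ^ (k - 1)))"

definition spectral_radius :: "nat \<Rightarrow> nat \<Rightarrow> tensor \<Rightarrow> real" where
  "spectral_radius n k T = Sup {cmod mu | mu. tensor_eigenvalue n k T mu}"

definition rho_alpha :: "real \<Rightarrow> nat \<Rightarrow> nat \<Rightarrow> nat set set \<Rightarrow> real" where
  "rho_alpha \<alpha> n k E = spectral_radius n k (A_alpha \<alpha> k E)"

end

theory Submission
  imports Defs "HOL-Analysis.Analysis"
begin


definition hs :: "nat set set \<Rightarrow> (nat \<Rightarrow> 'a::comm_ring_1) \<Rightarrow> nat \<Rightarrow> 'a" where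
  "hs E x i = (\<Sum>e\<in>{e\<in>E. i\<in>e}. \<Prod>j\<in>e-{i}. x j)"

definition perms :: "'a set \<Rightarrow> 'a list set" where
  "perms A = {xs. set xs = A \<and> distinct xs}"

lemma perms_alt: assumes f: "finite A" shows "perms A = {xs. length xs = card A \<and> distinct xs \<and> set xs \<subseteq> A}"
proof (rule set_eqI)
  fix xs
  show "xs \<in> perms A \<longleftrightarrow> xs \<in> {xs. length xs = card A \<and> distinct xs \<and> set xs \<subseteq> A}"
    using card_subset_eq[OF f, of "set xs"] by (auto simp: perms_def distinct_card)
qed

lemma card_perms: "finite A \<Longrightarrow> card (perms A) = fact (card A)"
  by (simp add: perms_alt card_lists_distinct_length_eq fact_prod)

lemma finite_perms: "finite A \<Longrightarrow> finite (perms A)"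
  by (rule card_ge_0_finite) (simp add: card_perms)

lemma finite_E: "uniform_hypergraph n k E \<Longrightarrow> finite E"
  unfolding uniform_hypergraph_def
  by (rule finite_subset[of _ "Pow {0..<n}"]) auto

lemma finite_index_lists: "finite (index_lists n m)"
proof -
  have "index_lists n m = {xs. set xs \<subseteq> {0..<n} \<and> length xs = m}"
    unfolding index_lists_def by auto
  thus ?thesis using finite_lists_length_eq[of "{0..<n}" m] by simp
qed

lemma adj_lists_eq:
  assumes U: "uniform_hypergraph n k E" and k: "k \<ge> 1"
  shows "{is\<in>index_lists n (k-1). set(i#is)\<in>E} = (\<Union>e\<in>{e\<in>E. i\<in>e}. perms (e-{i}))"
proof (intro equalityI subsetI)
  fix xs assume "xs \<in> {is\<in>index_lists n (k-1). set(i#is)\<in>E}"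
  hence l: "length xs = k - 1" and e: "set (i#xs) \<in> E" unfolding index_lists_def by auto
  have ck: "card (set (i#xs)) = k" using e U unfolding uniform_hypergraph_def by auto
  have "card (set (i#xs)) \<le> Suc (card (set xs))" by (simp add: card_insert_le_m1)
  have c1: "card (set xs) \<le> length xs" by (rule card_length)
  have ni: "i \<notin> set xs"
  proof
    assume "i \<in> set xs" hence "set (i#xs) = set xs" by auto
    thus False using ck c1 l k by auto
  qed
  hence "card (set xs) = k - 1" using ck by (simp add: card_insert_if)
  hence "distinct xs" using l by (simp add: card_distinct)
  moreover have "set xs = set (i#xs) - {i}" using ni by auto
  ultimately have "xs \<in> perms (set (i#xs) - {i})" unfolding perms_def by simp
  moreover have "set (i#xs) \<in> {e\<in>E. i\<in>e}" using e by simp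
  ultimately show "xs \<in> (\<Union>e\<in>{e\<in>E. i\<in>e}. perms (e-{i}))" by blast
next
  fix xs assume "xs \<in> (\<Union>e\<in>{e\<in>E. i\<in>e}. perms (e-{i}))"
  then obtain e where e: "e \<in> E" "i \<in> e" and p: "set xs = e - {i}" "distinct xs"
    unfolding perms_def by auto
  have "card e = k" "e \<subseteq> {0..<n}" using e U unfolding uniform_hypergraph_def by auto
  moreover have "finite e" using \<open>e \<subseteq> {0..<n}\<close> finite_subset by blast
  ultimately have "length xs = k - 1" using p e by (simp add: distinct_card[symmetric])
  moreover have "set (i#xs) = e" using p e by auto
  ultimately show "xs \<in> {is\<in>index_lists n (k-1). set(i#is)\<in>E}"
    unfolding index_lists_def using p e \<open>e \<subseteq> {0..<n}\<close> by auto
qed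

lemma adj_sum_eq:
  fixes x :: "nat \<Rightarrow> 'a::comm_ring_1"
  assumes U: "uniform_hypergraph n k E" and k: "k \<ge> 1"
  shows "(\<Sum>is\<in>{is\<in>index_lists n (k-1). set(i#is)\<in>E}. prod_list (map x is)) = of_nat (fact (k-1)) * hs E x i"
proof -
  have fE: "finite E" using U by (rule finite_E)
  have sub: "\<And>e. e \<in> E \<Longrightarrow> finite e \<and> card e = k \<and> e \<subseteq> {0..<n}"
    using U unfolding uniform_hypergraph_def by (auto intro: finite_subset)
  have "(\<Sum>is\<in>{is\<in>index_lists n (k-1). set(i#is)\<in>E}. prod_list (map x is))
      = (\<Sum>e\<in>{e\<in>E. i\<in>e}. \<Sum>is\<in>perms (e-{i}). prod_list (map x is))"
    unfolding adj_lists_eq[OF U k]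
  proof (rule sum.UNION_disjoint)
    show "finite {e\<in>E. i\<in>e}" using fE by simp
    show "\<forall>e\<in>{e\<in>E. i\<in>e}. finite (perms (e-{i}))" using sub by (auto intro: finite_perms)
    show "\<forall>e\<in>{e\<in>E. i\<in>e}. \<forall>f\<in>{e\<in>E. i\<in>e}. e \<noteq> f \<longrightarrow>
        perms (e-{i}) \<inter> perms (f-{i}) = {}"
    proof (intro ballI impI)
      fix e f assume e: "e \<in> {e\<in>E. i\<in>e}" and f: "f \<in> {e\<in>E. i\<in>e}" and ef: "e \<noteq> f"
      show "perms (e-{i}) \<inter> perms (f-{i}) = {}"
      proof (rule ccontr)
        assume "perms (e-{i}) \<inter> perms (f-{i}) \<noteq> {}"
        then obtain xs where "set xs = e - {i}" "set xs = f - {i}" unfolding perms_def by blast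
        hence "insert i (e - {i}) = insert i (f - {i})" by simp
        thus False using e f ef by (simp add: insert_absorb)
      qed
    qed
  qed
  also have "\<dots> = (\<Sum>e\<in>{e\<in>E. i\<in>e}. of_nat (fact (k-1)) * (\<Prod>j\<in>e-{i}. x j))"
  proof (rule sum.cong[OF refl])
    fix e assume e: "e \<in> {e\<in>E. i\<in>e}"
    have "(\<Sum>is\<in>perms (e-{i}). prod_list (map x is))
        = (\<Sum>is\<in>perms (e-{i}). (\<Prod>j\<in>e-{i}. x j))"
    proof (rule sum.cong[OF refl])
      fix xs assume "xs \<in> perms (e-{i})"
      hence d: "distinct xs" and st: "set xs = e - {i}" unfolding perms_def by auto
      have "prod_list (map x xs) = prod x (set xs)" by (rule prod.distinct_set_conv_list[OF d, symmetric])
      thus "prod_list (map x xs) = (\<Prod>j\<in>e-{i}. x j)" unfolding st .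
    qed
    also have "\<dots> = of_nat (fact (k-1)) * (\<Prod>j\<in>e-{i}. x j)"
      using sub[of e] e by (simp add: card_perms)
    finally show "(\<Sum>is\<in>perms (e-{i}). prod_list (map x is)) = of_nat (fact (k-1)) * (\<Prod>j\<in>e-{i}. x j)" .
  qed
  also have "\<dots> = of_nat (fact (k-1)) * hs E x i" by (simp add: hs_def sum_distrib_left)
  finally show ?thesis .
qed

lemma tensor_formula:
  assumes U: "uniform_hypergraph n k E" and k: "k \<ge> 2" and i: "i < n"
  shows "tensor_apply n k (A_alpha \<alpha> k E) x i
     = of_real \<alpha> * of_nat (Defs.degree E i) * x i ^ (k-1) + of_real (1-\<alpha>) * hs E x i"
proof -
  let ?IL = "index_lists n (k-1)"
  have fIL: "finite ?IL" by (rule finite_index_lists)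
  have rep: "replicate (k-1) i \<in> ?IL" using i unfolding index_lists_def by auto
  have "tensor_apply n k (A_alpha \<alpha> k E) x i
     = of_real \<alpha> * (\<Sum>is\<in>?IL. of_real (deg_tensor k E i is) * prod_list (map x is))
       + of_real (1-\<alpha>) * (\<Sum>is\<in>?IL. of_real (adj_tensor k E i is) * prod_list (map x is))"
    unfolding tensor_apply_def A_alpha_def sum_distrib_left sum.distrib[symmetric]
    by (rule sum.cong[OF refl]) (simp add: algebra_simps)
  also have "(\<Sum>is\<in>?IL. of_real (deg_tensor k E i is) * prod_list (map x is))
      = (\<Sum>is\<in>?IL. if is = replicate (k-1) i then of_nat (Defs.degree E i) * x i ^ (k-1) else 0)"
    by (rule sum.cong[OF refl]) (auto simp: deg_tensor_def)
  also have "\<dots> = of_nat (Defs.degree E i) * x i ^ (k-1)"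
    using fIL rep by (simp add: sum.delta')
  also have "(\<Sum>is\<in>?IL. of_real (adj_tensor k E i is) * prod_list (map x is))
      = (\<Sum>is\<in>?IL. if set (i#is) \<in> E then prod_list (map x is) / of_nat (fact (k-1)) else 0)"
    by (rule sum.cong[OF refl]) (auto simp: adj_tensor_def)
  also have "\<dots> = (\<Sum>is\<in>{is\<in>?IL. set(i#is)\<in>E}. prod_list (map x is)) / of_nat (fact (k-1))"
    using fIL by (simp add: sum.If_cases sum_divide_distrib Int_def conj_commute)
  also have "\<dots> = hs E x i"
    using adj_sum_eq[OF U, of x i] k by simp
  finally show ?thesis by (simp add: mult.assoc)
qed



lemma dseq_facts:
  fixes f :: "nat \<Rightarrow> nat" and n :: nat
  defines "s \<equiv> sort (map f [0..<n])"
  assumes n: "n \<ge> 2"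
  shows "rev s ! 0 = s ! (n-1)" "rev s ! 1 = s ! (n-2)" "length s = n" "sorted s"
proof -
  show ls: "length s = n" unfolding s_def by simp
  show "rev s ! 0 = s ! (n-1)" using ls n by (simp add: rev_nth)
  show "rev s ! 1 = s ! (n-2)" using ls n by (simp add: rev_nth numeral_2_eq_2)
  show "sorted s" unfolding s_def by simp
qed

lemma dseq_max:
  fixes f :: "nat \<Rightarrow> nat"
  assumes n: "n \<ge> 2" and i: "i < n"
  shows "f i \<le> rev (sort (map f [0..<n])) ! 0"
proof -
  define s where "s = sort (map f [0..<n])"
  note F = dseq_facts[OF n, where f=f, folded s_def]
  have "f i \<in> set s" using i unfolding s_def by simp
  then obtain m where m: "m < n" "s ! m = f i" using F(3) by (metis in_set_conv_nth)
  have "s ! m \<le> s ! (n-1)" using F(4) F(3) m by (intro sorted_nth_mono) auto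
  thus ?thesis using m F(1) unfolding s_def by simp
qed

lemma dseq_second:
  fixes f :: "nat \<Rightarrow> nat"
  assumes n: "n \<ge> 2" and i: "i < n" and j: "j < n" and ij: "i \<noteq> j"
  shows "min (f i) (f j) \<le> rev (sort (map f [0..<n])) ! 1"
proof (rule ccontr)
  define s where "s = sort (map f [0..<n])"
  note F = dseq_facts[OF n, where f=f, folded s_def]
  let ?P = "\<lambda>y. s ! (n-2) < y"
  assume "\<not> ?thesis"
  hence Pi: "?P (f i)" "?P (f j)" using F(2) unfolding s_def by auto
  have "length (filter ?P (map f [0..<n])) = card {m. m < n \<and> ?P (f m)}"
    by (simp add: length_filter_conv_card cong: conj_cong)
  also have "\<dots> \<ge> card {i, j}"
    by (rule card_mono) (use Pi i j in auto)
  finally have ge2: "length (filter ?P (map f [0..<n])) \<ge> 2" using ij by simp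
  have eqs: "length (filter ?P s) = length (filter ?P (map f [0..<n]))"
    unfolding s_def filter_sort by simp
  have "length (filter ?P s) = card {m. m < n \<and> ?P (s ! m)}"
    using F(3) by (simp add: length_filter_conv_card)
  also have "\<dots> \<le> card {n-1}"
  proof (rule card_mono)
    show "{m. m < n \<and> ?P (s ! m)} \<subseteq> {n-1}"
    proof
      fix m assume "m \<in> {m. m < n \<and> ?P (s ! m)}"
      hence m: "m < n" "?P (s ! m)" by auto
      have "\<not> m \<le> n - 2"
      proof
        assume "m \<le> n-2"
        hence "s ! m \<le> s ! (n-2)" using F(4) F(3) n by (intro sorted_nth_mono) auto
        thus False using m by simp
      qed
      thus "m \<in> {n-1}" using m by auto
    qed
  qed simp
  finally show False using ge2 eqs by simp
qed

lemma dseq_const: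
  fixes f :: "nat \<Rightarrow> nat"
  assumes n: "n \<ge> 2" and c: "\<And>i. i < n \<Longrightarrow> f i = d"
  shows "rev (sort (map f [0..<n])) ! 0 = d" "rev (sort (map f [0..<n])) ! 1 = d"
proof -
  have "map f [0..<n] = replicate n d"
    by (rule nth_equalityI) (auto simp: c)
  hence "rev (sort (map f [0..<n])) = replicate n d" by simp
  thus "rev (sort (map f [0..<n])) ! 0 = d" "rev (sort (map f [0..<n])) ! 1 = d" using n by auto
qed

lemma dseq_mem:
  fixes f :: "nat \<Rightarrow> nat"
  assumes n: "n \<ge> 2"
  shows "rev (sort (map f [0..<n])) ! 1 \<le> rev (sort (map f [0..<n])) ! 0"
proof -
  define s where "s = sort (map f [0..<n])"
  note F = dseq_facts[OF n, where f=f, folded s_def]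
  have "s ! (n-2) \<le> s ! (n-1)" using F(4) F(3) n by (intro sorted_nth_mono) auto
  thus ?thesis using F(1,2) unfolding s_def by simp
qed



lemma powr_P_facts:
  fixes d1 d2 :: real and k :: nat
  assumes k: "k \<ge> 2" and d2: "1 \<le> d2" and d12: "d2 \<le> d1"
  shows "d2 \<le> d1 powr (1/k) * d2 powr (1 - 1/k)"
    and "d2 < d1 \<Longrightarrow> d2 < d1 powr (1/k) * d2 powr (1 - 1/k)"
proof -
  have e: "d2 = d2 powr (1/k) * d2 powr (1 - 1/k)"
    using d2 by (simp add: powr_add[symmetric])
  have p: "d2 powr (1 - 1/k) > 0" using d2 by simp
  have k0: "(0::real) < 1 / real k" using k by simp
  show "d2 \<le> d1 powr (1/k) * d2 powr (1 - 1/k)"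
    by (subst e) (rule mult_right_mono[OF powr_mono2], use k0 d2 d12 p in auto)
  assume "d2 < d1"
  show "d2 < d1 powr (1/k) * d2 powr (1 - 1/k)"
    by (subst e) (rule mult_strict_right_mono[OF powr_less_mono2], use k0 d2 \<open>d2 < d1\<close> p in auto)
qed

lemma C_root:
  fixes d1 d2 \<alpha> :: real and k :: nat
  assumes k: "k \<ge> 2" and d2: "1 \<le> d2" and d12: "d2 \<le> d1" and a: "0 < \<alpha>" "\<alpha> < 1"
  shows "((1-\<alpha>)^k * d1 * d2^(k-1)) powr (1/k) = (1-\<alpha>) * (d1 powr (1/k) * d2 powr (1 - 1/k))"
proof -
  have kk: "real k \<noteq> 0" using k by simp
  have "((1-\<alpha>)^k * d1 * d2^(k-1)) powr (1/k) = ((1-\<alpha>)^k) powr (1/k) * d1 powr (1/k) * (d2^(k-1)) powr (1/k)"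
    using a d2 d12 by (simp add: powr_mult)
  also have "((1-\<alpha>)^k) powr (1/k) = 1 - \<alpha>"
    using a kk by (simp add: powr_realpow[symmetric] powr_powr)
  also have "(d2^(k-1)) powr (1/k) = d2 powr (1 - 1/k)"
    using d2 kk k by (simp add: powr_realpow[symmetric] powr_powr of_nat_diff field_simps)
  finally show ?thesis by simp
qed

lemma arith_core:
  fixes \<alpha> lam M w du dv d1 d2 :: real and k :: nat
  assumes k: "k \<ge> 2" and a: "0 < \<alpha>" "\<alpha> < 1" and M: "M > 0" and w: "0 \<le> w" "w \<le> M"
    and du: "0 \<le> du" "du \<le> d1" and dv: "0 \<le> dv" "dv \<le> d1" and dm: "du \<le> d2 \<or> dv \<le> d2"
    and d2: "1 \<le> d2" and d12: "d2 \<le> d1"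
    and Gu: "lam * M^(k-1) \<le> \<alpha> * du * M^(k-1) + (1-\<alpha>) * du * w^(k-1)"
    and Gv: "lam * w^(k-1) \<le> \<alpha> * dv * w^(k-1) + (1-\<alpha>) * dv * M * w^(k-2)"
  shows "lam \<le> \<alpha> * d1 + (1-\<alpha>) * (d1 powr (1/k) * d2 powr (1 - 1/k))
     \<and> (d2 < d1 \<longrightarrow> lam < \<alpha> * d1 + (1-\<alpha>) * (d1 powr (1/k) * d2 powr (1 - 1/k)))"
proof -
  define P where "P = d1 powr (1/k) * d2 powr (1 - 1/k)"
  define B where "B = \<alpha> * d1 + (1-\<alpha>) * P"
  have P1: "d2 \<le> P" and P2: "d2 < d1 \<Longrightarrow> d2 < P"
    using powr_P_facts[OF k d2 d12] unfolding P_def by auto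
  have easy: "lam \<le> \<alpha> * d1 + (1-\<alpha>) * d2 \<Longrightarrow> lam \<le> B \<and> (d2 < d1 \<longrightarrow> lam < B)"
  proof -
    assume h: "lam \<le> \<alpha> * d1 + (1-\<alpha>) * d2"
    have "(1-\<alpha>) * d2 \<le> (1-\<alpha>) * P" using P1 a by simp
    moreover have "d2 < d1 \<Longrightarrow> (1-\<alpha>) * d2 < (1-\<alpha>) * P" using P2 a by simp
    ultimately show ?thesis using h unfolding B_def by auto
  qed
  have Mk: "M^(k-1) > 0" using M by simp
  have main: "lam \<le> B \<and> (d2 < d1 \<longrightarrow> lam < B)"
  proof (cases "w = 0")
    case True
    have z: "(0::real)^(k-1) = 0" using k by simp
    have "lam * M^(k-1) \<le> \<alpha> * du * M^(k-1)" using Gu unfolding True z by simp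
    hence "lam \<le> \<alpha> * du" using Mk by simp
    also have "\<dots> \<le> \<alpha> * d1 + (1-\<alpha>) * d2" using a du d2 by (simp add: mult_left_mono add_increasing2)
    finally show ?thesis by (rule easy)
  next
    case False
    hence wp: "w > 0" using w by simp
    define t where "t = w / M"
    have t: "0 < t" "t \<le> 1" using wp w M unfolding t_def by auto
    have wt: "w = t * M" using M unfolding t_def by simp
    have "lam * M^(k-1) \<le> (\<alpha> * du + (1-\<alpha>) * du * t^(k-1)) * M^(k-1)"
      using Gu unfolding wt by (simp add: power_mult_distrib algebra_simps)
    hence Gu': "lam \<le> \<alpha> * du + (1-\<alpha>) * du * t^(k-1)" using Mk by simp
    have ek: "w^(k-1) = w * w^(k-2)" using k by (simp add: power_Suc[symmetric] Suc_diff_Suc numeral_2_eq_2)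
    have wk: "w^(k-2) > 0" using wp by simp
    have "(lam * w) * w^(k-2) \<le> (\<alpha> * dv * w + (1-\<alpha>) * dv * M) * w^(k-2)"
      using Gv unfolding ek by (simp add: algebra_simps)
    hence "lam * w \<le> \<alpha> * dv * w + (1-\<alpha>) * dv * M" using wk by simp
    hence "(lam * t) * M \<le> (\<alpha> * dv * t + (1-\<alpha>) * dv) * M" unfolding wt by (simp add: algebra_simps)
    hence Gv': "lam * t \<le> \<alpha> * dv * t + (1-\<alpha>) * dv" using M by simp
    have tk: "t^(k-1) \<le> 1" using t by (simp add: power_le_one)
    show ?thesis
    proof (cases "du \<le> d2")
      case True
      have "(1-\<alpha>) * du * t^(k-1) \<le> (1-\<alpha>) * d2 * 1"
        using a du t tk True by (intro mult_mono) auto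
      moreover have "\<alpha> * du \<le> \<alpha> * d1" using a du by simp
      ultimately have "lam \<le> \<alpha> * d1 + (1-\<alpha>) * d2" using Gu' by simp
      thus ?thesis by (rule easy)
    next
      case False
      hence dv2: "dv \<le> d2" using dm by simp
      show ?thesis
      proof (cases "lam \<le> \<alpha> * d1")
        case True
        hence "lam \<le> \<alpha> * d1 + (1-\<alpha>) * d2" using a d2 by (smt (verit) mult_nonneg_nonneg)
        thus ?thesis by (rule easy)
      next
        case False
        define A where "A = lam - \<alpha> * d1"
        have A0: "A > 0" using False unfolding A_def by simp
        define X where "X = lam - \<alpha> * d2"
        have AX: "A \<le> X" unfolding A_def X_def using a d12 by (simp add: mult_left_mono)
        have AXs: "d2 < d1 \<Longrightarrow> A < X" unfolding A_def X_def using a by simp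
        have i: "A \<le> (1-\<alpha>) * d1 * t^(k-1)"
        proof -
          have "A \<le> (1-\<alpha>) * du * t^(k-1)" using Gu' du a unfolding A_def by (smt (verit) mult_left_mono)
          also have "\<dots> \<le> (1-\<alpha>) * d1 * t^(k-1)" using du a t by (intro mult_right_mono mult_left_mono) auto
          finally show ?thesis .
        qed
        have ii: "X * t \<le> (1-\<alpha>) * d2"
        proof -
          have "X * t \<le> (lam - \<alpha> * dv) * t" unfolding X_def using a dv2 t by (intro mult_right_mono) (auto simp: mult_left_mono)
          also have "\<dots> \<le> (1-\<alpha>) * dv" using Gv' by (simp add: algebra_simps)
          also have "\<dots> \<le> (1-\<alpha>) * d2" using a dv2 by simp
          finally show ?thesis .
        qed
        have X0: "X > 0" using A0 AX by simp
        have iii: "X^(k-1) * t^(k-1) \<le> ((1-\<alpha>) * d2)^(k-1)"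
          using ii X0 t by (simp add: power_mult_distrib[symmetric] power_mono)
        have iv: "A * X^(k-1) \<le> (1-\<alpha>)^k * d1 * d2^(k-1)"
        proof -
          have "A * X^(k-1) \<le> (1-\<alpha>) * d1 * t^(k-1) * X^(k-1)"
            using i X0 by (intro mult_right_mono) auto
          also have "\<dots> = (1-\<alpha>) * d1 * (X^(k-1) * t^(k-1))" by simp
          also have "\<dots> \<le> (1-\<alpha>) * d1 * ((1-\<alpha>) * d2)^(k-1)"
            using iii a d12 d2 by (intro mult_left_mono) auto
          also have "\<dots> = (1-\<alpha>)^k * d1 * d2^(k-1)"
            using k by (simp add: power_mult_distrib power_Suc[symmetric] Suc_diff_Suc numeral_2_eq_2 del: power_Suc)
          finally show ?thesis .
        qed
        have Ak: "A^k = A * A^(k-1)" using k by (simp add: power_Suc[symmetric] Suc_diff_Suc numeral_2_eq_2 del: power_Suc)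
        have v: "A^k \<le> A * X^(k-1)" unfolding Ak using A0 AX by (intro mult_left_mono power_mono) auto
        have vs: "d2 < d1 \<Longrightarrow> A^k < A * X^(k-1)" unfolding Ak using A0 AX AXs k
          by (intro mult_strict_left_mono power_strict_mono) auto
        define C where "C = (1-\<alpha>)^k * d1 * d2^(k-1)"
        have C0: "C \<ge> 0" unfolding C_def using a d2 d12 by simp
        have kp: "(0::real) < 1 / real k" using k by simp
        have Ar: "(A^k) powr (1/k) = A" using A0 k by (simp add: powr_realpow[symmetric] powr_powr)
        have CP: "C powr (1/k) = (1-\<alpha>) * P" unfolding C_def P_def by (rule C_root[OF k d2 d12 a])
        have "A \<le> (1-\<alpha>) * P"
        proof -
          have "(A^k) powr (1/k) \<le> C powr (1/k)" using v iv A0 kp unfolding C_def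
            by (intro powr_mono2) auto
          thus ?thesis using Ar CP by simp
        qed
        moreover have "d2 < d1 \<Longrightarrow> A < (1-\<alpha>) * P"
        proof -
          assume s: "d2 < d1"
          have "(A^k) powr (1/k) < C powr (1/k)" using vs[OF s] iv A0 kp unfolding C_def
            by (intro powr_less_mono2) auto
          thus ?thesis using Ar CP by simp
        qed
        ultimately show ?thesis unfolding B_def A_def by auto
      qed
    qed
  qed
  thus ?thesis unfolding B_def P_def .
qed


lemma pow_split: "(k::nat) \<ge> 1 \<Longrightarrow> (x::real)^k = x * x^(k-1)"
  by (cases k) auto

lemma pow_split2: "(k::nat) \<ge> 2 \<Longrightarrow> (x::real)^(k-1) = x * x^(k-2)"
  using pow_split[of "k-1" x] by (simp add: numeral_2_eq_2)

lemma coord_cont [continuous_intros]: "continuous_on S (\<lambda>y::nat \<Rightarrow> real. y i)"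
  by (rule continuous_on_subset[OF continuous_on_product_coordinates]) auto

locale hg =
  fixes n k :: nat and E :: "nat set set" and \<alpha> :: real
  assumes U: "uniform_hypergraph n k E" and k2: "k \<ge> 2" and a0: "0 < \<alpha>" and a1: "\<alpha> < 1"
    and n2: "n \<ge> 2"
begin

abbreviation dg :: "nat \<Rightarrow> nat" where "dg i \<equiv> Defs.degree E i"

definition N :: "(nat \<Rightarrow> real) \<Rightarrow> real" where "N y = (\<Sum>i<n. y i ^ k)"
definition F :: "(nat \<Rightarrow> real) \<Rightarrow> real" where
  "F y = \<alpha> * (\<Sum>i<n. real (dg i) * y i ^ k) + (1-\<alpha>) * real k * (\<Sum>e\<in>E. \<Prod>j\<in>e. y j)"
definition K :: "(nat \<Rightarrow> real) set" where
  "K = {y. (\<forall>i. y i \<in> (if i < n then {0..1} else {0})) \<and> N y = 1}"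

lemma fE: "finite E" using U by (rule finite_E)

lemma edge: "e \<in> E \<Longrightarrow> e \<subseteq> {0..<n} \<and> card e = k \<and> finite e"
  using U unfolding uniform_hypergraph_def by (auto intro: finite_subset)

lemma K_compact: "compact K"
proof -
  define S where "S = (\<lambda>i::nat. if i < n then {0..1::real} else {0})"
  have "compactin (product_topology (\<lambda>i. euclidean) UNIV) (PiE UNIV S)"
    by (subst compactin_PiE) (simp add: S_def)
  hence c1: "compact (PiE UNIV S)" by (metis compactin_euclidean_iff euclidean_product_topology)
  have c2: "closed {y. N y = 1}"
    unfolding N_def by (rule closed_Collect_eq) (intro continuous_intros)+
  have "K = PiE UNIV S \<inter> {y. N y = 1}" by (auto simp: K_def S_def PiE_def extensional_def Pi_def)
  thus ?thesis using compact_Int_closed c1 c2 by simp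
qed

lemma K_ne: "(\<lambda>i. if i = 0 then 1 else 0) \<in> K"
proof -
  have "N (\<lambda>i. if i = 0 then 1 else 0) = (\<Sum>i<n. if i = 0 then 1 else 0)"
    unfolding N_def using k2 by (intro sum.cong) auto
  also have "\<dots> = 1" using n2 by simp
  finally show ?thesis unfolding K_def using n2 by auto
qed

lemma F_cont: "continuous_on S F"
  unfolding F_def by (intro continuous_intros)

lemma max_exists: "\<exists>z\<in>K. \<forall>y\<in>K. F y \<le> F z"
  by (rule continuous_attains_sup[OF K_compact]) (use K_ne F_cont in auto)

lemma F_scale: "F (\<lambda>i. c * y i) = c^k * F y"
proof -
  have s2: "(\<Sum>e\<in>E. \<Prod>j\<in>e. c * y j) = c^k * (\<Sum>e\<in>E. \<Prod>j\<in>e. y j)"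
    unfolding sum_distrib_left by (rule sum.cong[OF refl]) (simp add: prod.distrib edge)
  have s1: "(\<Sum>i<n. real (dg i) * (c * y i)^k) = c^k * (\<Sum>i<n. real (dg i) * y i^k)"
    by (simp add: power_mult_distrib sum_distrib_left algebra_simps)
  show ?thesis unfolding F_def s1 s2 by (simp add: algebra_simps)
qed

lemma N_scale: "N (\<lambda>i. c * y i) = c^k * N y"
  unfolding N_def by (simp add: power_mult_distrib sum_distrib_left)

lemma F_le:
  assumes z: "z \<in> K" "\<forall>y\<in>K. F y \<le> F z"
    and y: "\<forall>i. 0 \<le> y i" "\<forall>i\<ge>n. y i = 0" "N y > 0"
  shows "F y \<le> F z * N y"
proof -
  define r where "r = root k (N y)"
  have kp: "k > 0" using k2 by simp
  have r0: "r > 0" unfolding r_def using y kp by simp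
  have rk: "r^k = N y" unfolding r_def using y kp by simp
  define y' where "y' = (\<lambda>i. (1/r) * y i)"
  have Ny': "N y' = 1" unfolding y'_def N_scale using rk r0 y
    by (simp add: power_one_over)
  have "y' \<in> K"
  proof -
    have "y' i \<in> (if i < n then {0..1} else {0})" for i
    proof (cases "i < n")
      case True
      have "y' i ^ k \<le> N y'" unfolding N_def
        by (rule member_le_sum[of i "{..<n}" "\<lambda>i. y' i ^ k"]) (use True y r0 in \<open>auto simp: y'_def\<close>)
      hence "y' i ^ k \<le> 1" using Ny' by simp
      moreover have "0 \<le> y' i" using y r0 by (simp add: y'_def)
      ultimately have "y' i \<le> 1" using kp by (simp add: power_le_one_iff)
      thus ?thesis using True \<open>0 \<le> y' i\<close> by simp
    qed (use y in \<open>auto simp: y'_def\<close>)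
    thus ?thesis unfolding K_def using Ny' by auto
  qed
  hence "F y' \<le> F z" using z by auto
  moreover have "F y' = F y / N y" unfolding y'_def F_scale using rk r0
    by (simp add: power_one_over)
  ultimately show ?thesis using y by (simp add: field_simps)
qed


lemma K_props: assumes "z \<in> K" shows "\<forall>i. 0 \<le> z i" "\<forall>i\<ge>n. z i = 0" "N z = 1"
proof -
  have h: "\<And>i. z i \<in> (if i < n then {0..1} else {0})" using assms unfolding K_def by auto
  show "\<forall>i. 0 \<le> z i" using h by (metis atLeastAtMost_iff order_refl singletonD)
  show "\<forall>i\<ge>n. z i = 0" using h by (metis leD singletonD)
  show "N z = 1" using assms unfolding K_def by auto
qed

lemma hs_nonneg: "(\<forall>i. 0 \<le> y i) \<Longrightarrow> 0 \<le> hs E (y::nat\<Rightarrow>real) j"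
  unfolding hs_def by (intro sum_nonneg prod_nonneg) auto

lemma lagrange:
  assumes z: "z \<in> K" "\<forall>y\<in>K. F y \<le> F z" and j: "j < n"
  shows "F z * z j^(k-1) = \<alpha> * dg j * z j^(k-1) + (1-\<alpha>) * hs E z j"
proof -
  note zp = K_props[OF z(1)]
  define w where "w s = z(j := z j + s)" for s
  define D where "D s = (z j + s)^k - z j^k" for s
  define h where "h = hs E z j"
  have jn: "j \<in> {..<n}" using j by simp
  have Nw: "N (w s) = 1 + D s" for s
  proof -
    have "N (w s) = (z j + s)^k + (\<Sum>i\<in>{..<n}-{j}. z i ^ k)"
      unfolding N_def by (subst sum.remove[OF _ jn]) (auto simp: w_def intro!: sum.cong)
    moreover have "N z = z j ^ k + (\<Sum>i\<in>{..<n}-{j}. z i ^ k)"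
      unfolding N_def by (subst sum.remove[OF _ jn]) auto
    ultimately show ?thesis using zp(3) unfolding D_def by simp
  qed
  have dsum: "(\<Sum>i<n. real (dg i) * w s i ^ k) = (\<Sum>i<n. real (dg i) * z i ^ k) + real (dg j) * D s" for s
  proof -
    have "(\<Sum>i<n. real (dg i) * w s i ^ k) = real (dg j) * (z j + s)^k + (\<Sum>i\<in>{..<n}-{j}. real (dg i) * z i ^ k)"
      by (subst sum.remove[OF _ jn]) (auto simp: w_def intro!: sum.cong)
    moreover have "(\<Sum>i<n. real (dg i) * z i ^ k) = real (dg j) * z j ^ k + (\<Sum>i\<in>{..<n}-{j}. real (dg i) * z i ^ k)"
      by (subst sum.remove[OF _ jn]) auto
    ultimately show ?thesis unfolding D_def by (simp add: algebra_simps)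
  qed
  have esum: "(\<Sum>e\<in>E. \<Prod>i\<in>e. w s i) = (\<Sum>e\<in>E. \<Prod>i\<in>e. z i) + s * h" for s
  proof -
    have "(\<Sum>e\<in>E. \<Prod>i\<in>e. w s i) = (\<Sum>e\<in>E. (\<Prod>i\<in>e. z i) + (if j \<in> e then s * (\<Prod>i\<in>e-{j}. z i) else 0))"
    proof (rule sum.cong[OF refl])
      fix e assume e: "e \<in> E"
      have fe: "finite e" using edge[OF e] by simp
      show "(\<Prod>i\<in>e. w s i) = (\<Prod>i\<in>e. z i) + (if j \<in> e then s * (\<Prod>i\<in>e-{j}. z i) else 0)"
      proof (cases "j \<in> e")
        case True
        have "(\<Prod>i\<in>e. w s i) = w s j * (\<Prod>i\<in>e-{j}. w s i)" by (rule prod.remove[OF fe True])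
        also have "(\<Prod>i\<in>e-{j}. w s i) = (\<Prod>i\<in>e-{j}. z i)" by (rule prod.cong) (auto simp: w_def)
        also have "(\<Prod>i\<in>e. z i) = z j * (\<Prod>i\<in>e-{j}. z i)" by (rule prod.remove[OF fe True])
        ultimately show ?thesis using True by (simp add: w_def algebra_simps)
      next
        case False
        thus ?thesis by (auto simp: w_def intro!: prod.cong)
      qed
    qed
    also have "\<dots> = (\<Sum>e\<in>E. \<Prod>i\<in>e. z i) + (\<Sum>e\<in>E. if j \<in> e then s * (\<Prod>i\<in>e-{j}. z i) else 0)"
      by (rule sum.distrib)
    also have "(\<Sum>e\<in>E. if j \<in> e then s * (\<Prod>i\<in>e-{j}. z i) else 0) = s * h"
      unfolding h_def hs_def sum_distrib_left using fE by (simp add: sum.inter_filter)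
    finally show ?thesis .
  qed
  have Fw: "F (w s) = F z + \<alpha> * dg j * D s + (1-\<alpha>) * k * s * h" for s
    unfolding F_def dsum esum by (simp add: algebra_simps)
  define c where "c = F z - \<alpha> * dg j"
  define b where "b = (1-\<alpha>) * h"
  have ineq: "real k * s * b \<le> c * D s" if s: "z j + s > 0" for s
  proof -
    have "\<forall>i. 0 \<le> w s i" using zp s by (simp add: w_def less_imp_le)
    moreover have "\<forall>i\<ge>n. w s i = 0" using zp j by (auto simp: w_def)
    moreover have "N (w s) > 0"
    proof -
      have "w s j ^ k \<le> N (w s)" unfolding N_def
        by (rule member_le_sum) (use jn \<open>\<forall>i. 0 \<le> w s i\<close> in auto)
      moreover have "w s j ^ k > 0" using s by (simp add: w_def)
      ultimately show ?thesis by simp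
    qed
    ultimately have "F (w s) \<le> F z * N (w s)" using F_le[OF z] by blast
    thus ?thesis unfolding Fw Nw c_def b_def by (simp add: algebra_simps)
  qed
  have b0: "b \<ge> 0" unfolding b_def h_def using a1 hs_nonneg[OF zp(1)] by simp
  have k1: "k - 1 \<ge> 1" using k2 by simp
  show ?thesis
  proof (cases "z j = 0")
    case True
    have "b = 0"
    proof (rule ccontr)
      assume "b \<noteq> 0" hence bp: "b > 0" using b0 by simp
      define s where "s = min 1 (real k * b / (\<bar>c\<bar> + 1))"
      have kb: "real k * b > 0" using bp k2 by simp
      have s0: "s > 0" "s \<le> 1" unfolding s_def using kb by auto
      have z0: "(0::real)^k = 0" using k2 by simp
      have Ds: "D s = s^k" unfolding D_def True using z0 by simp
      have "real k * s * b \<le> c * s^k" using ineq[of s] s0 True unfolding Ds by simp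
      also have "\<dots> \<le> \<bar>c\<bar> * s^k" using s0 by (simp add: mult_right_mono)
      also have "s^k = s * s^(k-1)" using k2 by (intro pow_split) simp
      also have "s^(k-1) \<le> s^1" using s0 k1 by (intro power_decreasing) auto
      hence "\<bar>c\<bar> * (s * s^(k-1)) \<le> \<bar>c\<bar> * (s * s)" using s0 by (intro mult_left_mono) auto
      finally have "real k * b * s \<le> (\<bar>c\<bar> * s) * s" by (simp add: algebra_simps)
      hence "real k * b \<le> \<bar>c\<bar> * s" using s0 by simp
      also have "\<dots> \<le> \<bar>c\<bar> * (real k * b / (\<bar>c\<bar> + 1))" unfolding s_def by (intro mult_left_mono) auto
      also have "\<dots> < real k * b" using kb by (simp add: field_simps)
      finally show False by simp
    qed
    moreover have "(0::real)^(k-1) = 0" using k2 by simp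
    ultimately show ?thesis using True a1 unfolding b_def h_def by simp
  next
    case False
    hence zj: "z j > 0" using zp by (metis less_eq_real_def)
    define \<phi> where "\<phi> s = c * D s - real k * s * b" for s
    have der: "(\<phi> has_real_derivative (c * (real k * z j^(k-1)) - real k * b)) (at 0)"
      unfolding \<phi>_def D_def by (auto intro!: derivative_eq_intros)
    have "c * (real k * z j^(k-1)) - real k * b = 0"
    proof (rule DERIV_local_min[OF der zj], intro allI impI)
      fix y assume "\<bar>0 - y\<bar> < z j"
      hence "z j + y > 0" by simp
      thus "\<phi> 0 \<le> \<phi> y" using ineq[of y] unfolding \<phi>_def D_def by simp
    qed
    hence "c * z j^(k-1) = b" using k2 by (simp add: algebra_simps)
    thus ?thesis unfolding c_def b_def h_def by (simp add: algebra_simps)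
  qed
qed


lemma sum_hs: "(\<Sum>i<n. y i * hs E y i) = real k * (\<Sum>e\<in>E. \<Prod>j\<in>e. (y j :: real))"
proof -
  have "(\<Sum>i<n. y i * hs E y i) = (\<Sum>i\<in>{..<n}. \<Sum>e\<in>{e\<in>E. i\<in>e}. \<Prod>j\<in>e. y j)"
    unfolding hs_def sum_distrib_left
  proof (intro sum.cong refl)
    fix i e assume "e \<in> {e\<in>E. i\<in>e}"
    hence "i \<in> e" "finite e" using edge by auto
    thus "y i * (\<Prod>j\<in>e-{i}. y j) = (\<Prod>j\<in>e. y j)" by (simp add: prod.remove)
  qed
  also have "\<dots> = (\<Sum>e\<in>E. \<Sum>i\<in>{i\<in>{..<n}. i\<in>e}. \<Prod>j\<in>e. y j)"
    by (rule sum.swap_restrict) (simp_all add: fE)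
  also have "\<dots> = (\<Sum>e\<in>E. real k * (\<Prod>j\<in>e. y j))"
  proof (rule sum.cong[OF refl])
    fix e assume e: "e \<in> E"
    have "{i\<in>{..<n}. i\<in>e} = e" using edge[OF e] by auto
    thus "(\<Sum>i\<in>{i\<in>{..<n}. i\<in>e}. \<Prod>j\<in>e. y j) = real k * (\<Prod>j\<in>e. y j)" using edge[OF e] by simp
  qed
  finally show ?thesis by (simp add: sum_distrib_left)
qed

lemma eig_bound:
  assumes z: "z \<in> K" "\<forall>y\<in>K. F y \<le> F z" and mu: "tensor_eigenvalue n k (A_alpha \<alpha> k E) \<mu>"
  shows "cmod \<mu> \<le> F z"
proof -
  obtain x where x0: "\<exists>i<n. x i \<noteq> 0" and xe: "\<forall>i<n. tensor_apply n k (A_alpha \<alpha> k E) x i = \<mu> * x i ^ (k-1)"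
    using mu unfolding tensor_eigenvalue_def by blast
  define y where "y i = (if i < n then cmod (x i) else 0)" for i
  have y0: "\<forall>i. 0 \<le> y i" "\<forall>i\<ge>n. y i = 0" unfolding y_def by auto
  have hsb: "cmod (hs E x i) \<le> hs E y i" for i
  proof -
    have "cmod (hs E x i) \<le> (\<Sum>e\<in>{e\<in>E. i\<in>e}. cmod (\<Prod>j\<in>e-{i}. x j))"
      unfolding hs_def by (rule norm_sum)
    also have "\<dots> = hs E y i" unfolding hs_def
    proof (rule sum.cong[OF refl])
      fix e assume "e \<in> {e\<in>E. i\<in>e}"
      hence "e \<subseteq> {0..<n}" using edge by auto
      thus "cmod (\<Prod>j\<in>e-{i}. x j) = (\<Prod>j\<in>e-{i}. y j)"
        unfolding prod_norm[symmetric] by (intro prod.cong) (auto simp: y_def)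
    qed
    finally show ?thesis .
  qed
  have pt: "cmod \<mu> * y i ^ k \<le> \<alpha> * dg i * y i ^ k + (1-\<alpha>) * (y i * hs E y i)" if i: "i < n" for i
  proof -
    have eq: "\<mu> * x i ^ (k-1) = of_real \<alpha> * of_nat (dg i) * x i ^ (k-1) + of_real (1-\<alpha>) * hs E x i"
    proof -
      have t1: "tensor_apply n k (A_alpha \<alpha> k E) x i = \<mu> * x i ^ (k-1)" using xe i by blast
      show ?thesis using t1 tensor_formula[OF U k2 i, of \<alpha> x] by metis
    qed
    have "cmod \<mu> * y i ^ (k-1) = cmod (\<mu> * x i ^ (k-1))" using i by (simp add: y_def norm_mult norm_power)
    also have "\<dots> \<le> cmod (of_real \<alpha> * of_nat (dg i) * x i ^ (k-1)) + cmod (of_real (1-\<alpha>) * hs E x i)"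
      unfolding eq by (rule norm_triangle_ineq)
    also have "\<dots> = \<alpha> * dg i * y i ^ (k-1) + (1-\<alpha>) * cmod (hs E x i)"
    proof -
      have c1: "cmod (1 - complex_of_real \<alpha>) = 1 - \<alpha>"
        by (metis a1 abs_of_nonneg diff_ge_0_iff_ge less_imp_le norm_of_real of_real_1 of_real_diff)
      show ?thesis using i a0 a1 c1 by (simp add: y_def norm_mult norm_power)
    qed
    also have "\<dots> \<le> \<alpha> * dg i * y i ^ (k-1) + (1-\<alpha>) * hs E y i"
      using hsb a1 by (intro add_left_mono mult_left_mono) auto
    finally have h: "cmod \<mu> * y i ^ (k-1) \<le> \<alpha> * dg i * y i ^ (k-1) + (1-\<alpha>) * hs E y i" .
    have yk: "y i ^ k = y i * y i ^ (k-1)" using k2 by (intro pow_split) simp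
    have "y i * (cmod \<mu> * y i ^ (k-1)) \<le> y i * (\<alpha> * dg i * y i ^ (k-1) + (1-\<alpha>) * hs E y i)"
      using h y0 by (intro mult_left_mono) auto
    thus ?thesis unfolding yk by (simp add: algebra_simps)
  qed
  have "cmod \<mu> * N y = (\<Sum>i<n. cmod \<mu> * y i ^ k)" unfolding N_def by (simp add: sum_distrib_left)
  also have "\<dots> \<le> (\<Sum>i<n. \<alpha> * dg i * y i ^ k + (1-\<alpha>) * (y i * hs E y i))"
    by (rule sum_mono) (use pt in auto)
  also have "\<dots> = \<alpha> * (\<Sum>i<n. real (dg i) * y i^k) + (1-\<alpha>) * (\<Sum>i<n. y i * hs E y i)"
    by (simp add: sum.distrib sum_distrib_left mult.assoc)
  also have "\<dots> = F y" unfolding F_def sum_hs by (simp add: mult.assoc)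
  finally have l: "cmod \<mu> * N y \<le> F y" .
  have Np: "N y > 0"
  proof -
    obtain i where i: "i < n" "x i \<noteq> 0" using x0 by blast
    have "y i ^ k \<le> N y" unfolding N_def by (rule member_le_sum) (use i y0 in auto)
    moreover have "y i ^ k > 0" using i by (simp add: y_def)
    ultimately show ?thesis by simp
  qed
  have "F y \<le> F z * N y" by (rule F_le[OF z y0 Np])
  hence "cmod \<mu> * N y \<le> F z * N y" using l by simp
  thus ?thesis using Np by simp
qed

lemma z_eig:
  assumes z: "z \<in> K" "\<forall>y\<in>K. F y \<le> F z"
  shows "tensor_eigenvalue n k (A_alpha \<alpha> k E) (of_real (F z))"
proof -
  note zp = K_props[OF z(1)]
  have "\<exists>i<n. z i \<noteq> 0"
  proof (rule ccontr)
    assume "\<not> (\<exists>i<n. z i \<noteq> 0)"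
    hence zz: "\<And>i. i < n \<Longrightarrow> z i = 0" by blast
    have "N z = (\<Sum>i<n. (0::real))" unfolding N_def
      by (rule sum.cong[OF refl]) (use zz k2 in simp)
    thus False using zp(3) by simp
  qed
  then obtain i0 where i0: "i0 < n" "complex_of_real (z i0) \<noteq> 0" by auto
  have ev: "tensor_apply n k (A_alpha \<alpha> k E) (\<lambda>i. complex_of_real (z i)) i = of_real (F z) * (of_real (z i)) ^ (k-1)"
    if i: "i < n" for i
  proof -
    have h: "hs E (\<lambda>i. complex_of_real (z i)) i = of_real (hs E z i)" unfolding hs_def
      by (simp only: of_real_sum of_real_prod)
    have "tensor_apply n k (A_alpha \<alpha> k E) (\<lambda>i. complex_of_real (z i)) i
      = of_real \<alpha> * of_nat (dg i) * (of_real (z i))^(k-1) + of_real (1-\<alpha>) * of_real (hs E z i)"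
      using tensor_formula[OF U k2 i, of \<alpha> "\<lambda>i. complex_of_real (z i)"] h by simp
    also have "\<dots> = of_real (\<alpha> * dg i * z i^(k-1) + (1-\<alpha>) * hs E z i)"
      by (simp only: of_real_add of_real_mult of_real_power of_real_of_nat_eq)
    also have "\<dots> = of_real (F z * z i^(k-1))" using lagrange[OF z i] by simp
    also have "\<dots> = of_real (F z) * (of_real (z i)) ^ (k-1)"
      by (simp only: of_real_mult of_real_power)
    finally show ?thesis .
  qed
  show ?thesis unfolding tensor_eigenvalue_def
    by (rule exI[of _ "\<lambda>i. complex_of_real (z i)"]) (use i0 ev in blast)
qed

lemma rho_eq:
  assumes z: "z \<in> K" "\<forall>y\<in>K. F y \<le> F z"
  shows "rho_alpha \<alpha> n k E = F z"
  unfolding rho_alpha_def spectral_radius_def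
proof (rule cSup_eq_maximum)
  show "F z \<in> {cmod mu |mu. tensor_eigenvalue n k (A_alpha \<alpha> k E) mu}"
    using z_eig[OF z] K_props[OF z(1)] 
  proof -
    have "F z \<ge> 0" unfolding F_def using K_props[OF z(1)] a0 a1
      by (intro add_nonneg_nonneg mult_nonneg_nonneg sum_nonneg prod_nonneg) auto
    thus ?thesis using z_eig[OF z] by (intro CollectI exI[of _ "of_real (F z)"]) auto
  qed
  show "\<And>x. x \<in> {cmod mu |mu. tensor_eigenvalue n k (A_alpha \<alpha> k E) mu} \<Longrightarrow> x \<le> F z"
    using eig_bound[OF z] by blast
qed

lemma ones_eig:
  assumes z: "z \<in> K" "\<forall>y\<in>K. F y \<le> F z" and reg: "\<forall>i<n. dg i = d"
  shows "real d \<le> F z"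
proof -
  have "\<forall>i<n. tensor_apply n k (A_alpha \<alpha> k E) (\<lambda>i. 1) i = of_nat d * 1 ^ (k-1)"
  proof (intro allI impI)
    fix i assume i: "i < n"
    have h: "hs E (\<lambda>i. 1::complex) i = of_nat (dg i)" unfolding hs_def Defs.degree_def by simp
    show "tensor_apply n k (A_alpha \<alpha> k E) (\<lambda>i. 1) i = of_nat d * 1 ^ (k-1)"
      unfolding tensor_formula[OF U k2 i] h using reg i by (simp add: algebra_simps)
  qed
  hence "tensor_eigenvalue n k (A_alpha \<alpha> k E) (of_nat d)"
    unfolding tensor_eigenvalue_def using n2 by (intro exI[of _ "\<lambda>i. 1"]) (auto intro: exI[of _ 0])
  from eig_bound[OF z this] show ?thesis by simp
qed


lemma max_vertex:
  assumes z: "z \<in> K"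
  obtains u where "u < n" "\<forall>i<n. z i \<le> z u" "z u > 0"
proof -
  note zp = K_props[OF z]
  define M where "M = Max (z ` {..<n})"
  have "0 \<in> {..<n}" using n2 by simp
  hence ne: "z ` {..<n} \<noteq> {}" by blast
  obtain u where u: "u < n" "z u = M" using Max_in[OF _ ne] unfolding M_def by auto
  have le: "\<forall>i<n. z i \<le> z u" using u unfolding M_def by auto
  have "z u > 0"
  proof (rule ccontr)
    assume "\<not> z u > 0"
    hence zz: "\<And>i. i < n \<Longrightarrow> z i = 0" using le zp(1) by (meson antisym not_le order_trans)
    have "N z = (\<Sum>i<n. (0::real))" unfolding N_def
      by (rule sum.cong[OF refl]) (use zz k2 in simp)
    thus False using zp(3) by simp
  qed
  thus ?thesis using that u le by blast
qed

lemma prod_bound: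
  fixes z :: "nat \<Rightarrow> real" and w :: real
  assumes e: "e \<in> E" and i: "i \<in> e" and zp: "\<forall>j. 0 \<le> z j" and b: "\<forall>j\<in>e-{i}. z j \<le> w"
  shows "(\<Prod>j\<in>e-{i}. z j) \<le> w^(k-1)"
proof -
  have "(\<Prod>j\<in>e-{i}. z j) \<le> (\<Prod>j\<in>e-{i}. w)" by (rule prod_mono) (use zp b in auto)
  also have "\<dots> = w^(k-1)" using edge[OF e] i by simp
  finally show ?thesis .
qed

lemma hs_bound:
  fixes z :: "nat \<Rightarrow> real" and C :: real
  assumes zp: "\<forall>j. 0 \<le> z j" and b: "\<And>e. e \<in> E \<Longrightarrow> i \<in> e \<Longrightarrow> (\<Prod>j\<in>e-{i}. z j) \<le> C"
  shows "hs E z i \<le> dg i * C"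
proof -
  have "hs E z i \<le> (\<Sum>e\<in>{e\<in>E. i\<in>e}. C)" unfolding hs_def by (rule sum_mono) (use b in auto)
  also have "\<dots> = dg i * C" unfolding Defs.degree_def by simp
  finally show ?thesis .
qed

lemma two_vertex:
  assumes z: "z \<in> K" "\<forall>y\<in>K. F y \<le> F z"
    and d1: "\<forall>i<n. real (dg i) \<le> d1" and dm: "\<forall>i<n. \<forall>j<n. i \<noteq> j \<longrightarrow> min (real (dg i)) (real (dg j)) \<le> d2"
    and d2: "1 \<le> d2" and d12: "d2 \<le> d1"
  shows "F z \<le> \<alpha> * d1 + (1-\<alpha>) * (d1 powr (1/k) * d2 powr (1 - 1/k))
     \<and> (d2 < d1 \<longrightarrow> F z < \<alpha> * d1 + (1-\<alpha>) * (d1 powr (1/k) * d2 powr (1 - 1/k)))"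
proof -
  note zp = K_props[OF z(1)]
  obtain u where u: "u < n" "\<forall>i<n. z i \<le> z u" "z u > 0" using max_vertex[OF z(1)] by blast
  define M where "M = z u"
  have "(if u = 0 then 1 else 0) \<in> {..<n}-{u}" using n2 by auto
  hence ne: "z ` ({..<n}-{u}) \<noteq> {}" by blast
  have "Max (z ` ({..<n}-{u})) \<in> z ` ({..<n}-{u})" by (rule Max_in[OF _ ne]) simp
  then obtain v where v: "v \<in> {..<n}-{u}" "z v = Max (z ` ({..<n}-{u}))" by (metis imageE)
  have vmax: "\<forall>i<n. i \<noteq> u \<longrightarrow> z i \<le> z v" using v by auto
  define w where "w = z v"
  have vn: "v < n" "v \<noteq> u" using v by auto
  have w: "0 \<le> w" "w \<le> M" unfolding w_def M_def using zp u vn by auto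
  have Gu: "F z * M^(k-1) \<le> \<alpha> * dg u * M^(k-1) + (1-\<alpha>) * dg u * w^(k-1)"
  proof -
    have "hs E z u \<le> dg u * w^(k-1)"
    proof (rule hs_bound[OF zp(1)])
      fix e assume e: "e \<in> E" "u \<in> e"
      show "(\<Prod>j\<in>e-{u}. z j) \<le> w^(k-1)"
      proof (rule prod_bound[OF e zp(1)], intro ballI)
        fix j assume j: "j \<in> e - {u}"
        hence "j < n" using edge[OF e(1)] by auto
        thus "z j \<le> w" using vmax j unfolding w_def by auto
      qed
    qed
    hence "(1-\<alpha>) * hs E z u \<le> (1-\<alpha>) * (dg u * w^(k-1))" using a1 by (intro mult_left_mono) auto
    thus ?thesis using lagrange[OF z u(1)] unfolding M_def by (simp add: algebra_simps)
  qed
  have Gv: "F z * w^(k-1) \<le> \<alpha> * dg v * w^(k-1) + (1-\<alpha>) * dg v * M * w^(k-2)"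
  proof -
    have "hs E z v \<le> dg v * (M * w^(k-2))"
    proof (rule hs_bound[OF zp(1)])
      fix e assume e: "e \<in> E" "v \<in> e"
      have ce: "card e = k" "finite e" "e \<subseteq> {0..<n}" using edge[OF e(1)] by auto
      show "(\<Prod>j\<in>e-{v}. z j) \<le> M * w^(k-2)"
      proof (cases "u \<in> e")
        case True
        have ue: "u \<in> e - {v}" using True vn by auto
        have "(\<Prod>j\<in>e-{v}. z j) = z u * (\<Prod>j\<in>e-{v}-{u}. z j)"
          by (rule prod.remove) (use ce ue in auto)
        also have "(\<Prod>j\<in>e-{v}-{u}. z j) \<le> (\<Prod>j\<in>e-{v}-{u}. w)"
        proof (rule prod_mono)
          fix j assume j: "j \<in> e-{v}-{u}"
          hence "j < n" using ce by auto
          thus "0 \<le> z j \<and> z j \<le> w" using vmax j zp unfolding w_def by auto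
        qed
        also have "(\<Prod>j\<in>e-{v}-{u}. w) = w^(k-2)"
          using ce e ue by (simp add: card_Diff_singleton numeral_2_eq_2)
        finally show ?thesis unfolding M_def using u(3) by (simp add: mult_left_mono)
      next
        case False
        have "(\<Prod>j\<in>e-{v}. z j) \<le> w^(k-1)"
        proof (rule prod_bound[OF e zp(1)], intro ballI)
          fix j assume j: "j \<in> e - {v}"
          hence "j < n" "j \<noteq> u" using ce False by auto
          thus "z j \<le> w" using vmax j unfolding w_def by (cases "j = v") auto
        qed
        also have "w^(k-1) = w * w^(k-2)" using k2 by (rule pow_split2)
        also have "\<dots> \<le> M * w^(k-2)" using w by (intro mult_right_mono) auto
        finally show ?thesis .
      qed
    qed
    hence "(1-\<alpha>) * hs E z v \<le> (1-\<alpha>) * (dg v * (M * w^(k-2)))" using a1 by (intro mult_left_mono) auto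
    thus ?thesis using lagrange[OF z vn(1)] unfolding w_def by (simp add: algebra_simps)
  qed
  have dmin: "real (dg u) \<le> d2 \<or> real (dg v) \<le> d2" using dm u(1) vn by (metis min_def)
  show ?thesis
    by (rule arith_core[OF k2 a0 a1 _ w _ _ _ _ dmin d2 d12 Gu Gv])
       (use u(3) d1 u(1) vn in \<open>auto simp: M_def\<close>)
qed

lemma propagate:
  assumes z: "z \<in> K" "\<forall>y\<in>K. F y \<le> F z" and conn: "hg_connected n E"
    and d1: "\<forall>i<n. real (dg i) \<le> d1" and Fz: "d1 \<le> F z"
  shows "\<forall>i<n. real (dg i) = d1"
proof -
  note zp = K_props[OF z(1)]
  obtain u where u: "u < n" "\<forall>i<n. z i \<le> z u" "z u > 0" using max_vertex[OF z(1)] by blast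
  define M where "M = z u"
  define Z where "Z = {i. i < n \<and> z i = M}"
  have step: "real (dg i) = d1 \<and> (\<forall>e\<in>E. i \<in> e \<longrightarrow> e \<subseteq> Z)" if iZ: "i \<in> Z" for i
  proof -
    have i: "i < n" "z i = M" using iZ unfolding Z_def by auto
    have pb: "(\<Prod>j\<in>e-{i}. z j) \<le> M^(k-1)" if e: "e \<in> E" "i \<in> e" for e
      by (rule prod_bound[OF e zp(1)]) (use edge[OF e(1)] u in \<open>auto simp: M_def\<close>)
    have hb: "hs E z i \<le> dg i * M^(k-1)" by (rule hs_bound[OF zp(1) pb])
    have eq: "F z * M^(k-1) = \<alpha> * dg i * M^(k-1) + (1-\<alpha>) * hs E z i"
      using lagrange[OF z i(1)] i by simp
    have Mk: "M^(k-1) > 0" using u unfolding M_def by simp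
    have "(1-\<alpha>) * hs E z i \<le> (1-\<alpha>) * (dg i * M^(k-1))" using hb a1 by (intro mult_left_mono) auto
    hence "F z * M^(k-1) \<le> dg i * M^(k-1)" using eq by (simp add: algebra_simps)
    hence "F z \<le> dg i" using Mk by simp
    hence di: "real (dg i) = d1" "F z = d1" using d1 i Fz by force+
    have hsq: "hs E z i = dg i * M^(k-1)"
    proof -
      have "(1-\<alpha>) * hs E z i = (1-\<alpha>) * (dg i * M^(k-1))" using eq di by (simp add: algebra_simps)
      thus ?thesis using a1 by simp
    qed
    have "(\<Sum>e\<in>{e\<in>E. i\<in>e}. M^(k-1) - (\<Prod>j\<in>e-{i}. z j)) = 0"
      using hsq unfolding hs_def sum_subtractf Defs.degree_def by simp
    hence zero: "\<forall>e\<in>{e\<in>E. i\<in>e}. M^(k-1) - (\<Prod>j\<in>e-{i}. z j) = 0"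
      by (subst sum_nonneg_eq_0_iff[symmetric]) (use fE pb in auto)
    have "e \<subseteq> Z" if e: "e \<in> E" "i \<in> e" for e
    proof
      fix j assume j: "j \<in> e"
      have jn: "j < n" using edge[OF e(1)] j by auto
      show "j \<in> Z"
      proof (cases "j = i")
        case True thus ?thesis using iZ by simp
      next
        case False
        show ?thesis
        proof (rule ccontr)
          assume "j \<notin> Z"
          hence zj: "z j < M" using u jn unfolding Z_def M_def by (simp add: less_le)
          have ce: "card e = k" "finite e" using edge[OF e(1)] by auto
          have je: "j \<in> e - {i}" using j False by auto
          have "(\<Prod>l\<in>e-{i}. z l) = z j * (\<Prod>l\<in>e-{i}-{j}. z l)"
            by (rule prod.remove) (use ce je in auto)
          also have "(\<Prod>l\<in>e-{i}-{j}. z l) \<le> (\<Prod>l\<in>e-{i}-{j}. M)"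
            by (rule prod_mono) (use zp edge[OF e(1)] u in \<open>auto simp: M_def\<close>)
          also have "(\<Prod>l\<in>e-{i}-{j}. M) = M^(k-2)" using ce e je by (simp add: card_Diff_singleton numeral_2_eq_2)
          finally have "(\<Prod>l\<in>e-{i}. z l) \<le> z j * M^(k-2)" using zp by (simp add: mult_left_mono)
          also have "\<dots> < M * M^(k-2)" using zj u by (intro mult_strict_right_mono) (auto simp: M_def)
          also have "\<dots> = M^(k-1)" using pow_split2[OF k2] by simp
          finally show False using zero e by auto
        qed
      qed
    qed
    thus ?thesis using di by blast
  qed
  show ?thesis
  proof (intro allI impI)
    fix v assume v: "v < n"
    obtain vs es where p: "is_path E vs es" "hd vs = u" "last vs = v"
      using conn u(1) v unfolding hg_connected_def by blast
    have len: "length vs = length es + 1" "\<forall>i<length es. es ! i \<in> E \<and> vs ! i \<in> es ! i \<and> vs ! Suc i \<in> es ! i"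
      using p(1) unfolding is_path_def by auto
    have "\<forall>m\<le>length es. vs ! m \<in> Z"
    proof (intro allI impI)
      fix m assume "m \<le> length es"
      thus "vs ! m \<in> Z"
      proof (induction m)
        case 0
        have "vs \<noteq> []" using len by auto
        hence "vs ! 0 = u" using p(2) by (simp add: hd_conv_nth)
        thus ?case unfolding Z_def M_def using u by simp
      next
        case (Suc m)
        hence IH: "vs ! m \<in> Z" and ml: "m < length es" by auto
        show ?case using step[OF IH] len(2) ml by blast
      qed
    qed
    moreover have "last vs = vs ! length es"
    proof -
      have ne: "vs \<noteq> []" using len(1) by auto
      show ?thesis using len(1) by (simp add: last_conv_nth[OF ne])
    qed
    ultimately have "v \<in> Z" using p(3) by auto
    thus "real (dg v) = d1" using step by blast
  qed
qed

end


theorem mainTheorem2: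
  fixes n k :: nat and E :: "nat set set" and \<alpha> :: real
  assumes "k \<ge> 2" and "0 < \<alpha>" and "\<alpha> < 1" and "n \<ge> 2"
    and "uniform_hypergraph n k E" and "hg_connected n E"
    and "degree_seq n E ! 1 \<ge> 1"
  shows "rho_alpha \<alpha> n k E \<le> \<alpha> * real (degree_seq n E ! 0)
           + (1 - \<alpha>) * real (degree_seq n E ! 0) powr (1 / real k)
                      * real (degree_seq n E ! 1) powr (1 - 1 / real k)
       \<and> (rho_alpha \<alpha> n k E = \<alpha> * real (degree_seq n E ! 0)
           + (1 - \<alpha>) * real (degree_seq n E ! 0) powr (1 / real k)
                      * real (degree_seq n E ! 1) powr (1 - 1 / real k)
          \<longleftrightarrow> hg_regular n E)"
proof -
  interpret hg n k E \<alpha> using assms by unfold_locales auto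
  obtain z where z: "z \<in> K" "\<forall>y\<in>K. F y \<le> F z" using max_exists by blast
  have rho: "rho_alpha \<alpha> n k E = F z" by (rule rho_eq[OF z])
  define d1 where "d1 = real (degree_seq n E ! 0)"
  define d2 where "d2 = real (degree_seq n E ! 1)"
  have ds: "degree_seq n E = rev (sort (map (Defs.degree E) [0..<n]))" by (simp add: degree_seq_def)
  have D1: "\<forall>i<n. real (dg i) \<le> d1" unfolding d1_def ds using dseq_max[OF n2] by auto
  have Dm: "\<forall>i<n. \<forall>j<n. i \<noteq> j \<longrightarrow> min (real (dg i)) (real (dg j)) \<le> d2"
  proof (intro allI impI)
    fix i j assume ij: "i < n" "j < n" "i \<noteq> j"
    have "min (dg i) (dg j) \<le> degree_seq n E ! 1" unfolding ds using dseq_second[OF n2 ij] .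
    thus "min (real (dg i)) (real (dg j)) \<le> d2" unfolding d2_def by (simp add: min_def split: if_splits)
  qed
  have d2: "1 \<le> d2" unfolding d2_def using assms(7) by simp
  have d12: "d2 \<le> d1" unfolding d1_def d2_def ds using dseq_mem[OF n2] by simp
  note TV = two_vertex[OF z D1 Dm d2 d12]
  have Beq: "\<alpha> * real (degree_seq n E ! 0) + (1 - \<alpha>) * real (degree_seq n E ! 0) powr (1 / real k)
                      * real (degree_seq n E ! 1) powr (1 - 1 / real k)
     = \<alpha> * d1 + (1-\<alpha>) * (d1 powr (1/k) * d2 powr (1 - 1/k))"
    unfolding d1_def d2_def by (simp add: mult.assoc)
  have same: "d1 powr (1/k) * d1 powr (1 - 1/k) = d1" using d2 d12 by (simp add: powr_add[symmetric])
  show ?thesis unfolding rho Beq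
  proof (intro conjI iffI)
    show "F z \<le> \<alpha> * d1 + (1-\<alpha>) * (d1 powr (1/k) * d2 powr (1 - 1/k))" using TV by blast
  next
    assume eq: "F z = \<alpha> * d1 + (1-\<alpha>) * (d1 powr (1/k) * d2 powr (1 - 1/k))"
    have "\<not> d2 < d1" using TV eq by auto
    hence "d2 = d1" using d12 by simp
    hence "\<alpha> * d1 + (1-\<alpha>) * (d1 powr (1/k) * d2 powr (1 - 1/k)) = \<alpha> * d1 + (1-\<alpha>) * d1"
      using same by simp
    hence "F z = d1" using eq by (simp add: algebra_simps)
    hence all: "\<forall>i<n. real (dg i) = d1" using propagate[OF z assms(6) D1] by simp
    show "hg_regular n E" unfolding hg_regular_def
    proof (intro allI impI)
      fix u v assume "u < n" "v < n"
      hence "real (dg u) = real (dg v)" using all by simp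
      thus "Defs.degree E u = Defs.degree E v" by simp
    qed
  next
    assume reg: "hg_regular n E"
    have n0: "0 < n" using n2 by simp
    have c: "\<And>i. i < n \<Longrightarrow> dg i = dg 0"
      using reg[unfolded hg_regular_def, rule_format, OF _ n0] by blast
    have e0: "degree_seq n E ! 0 = dg 0" "degree_seq n E ! 1 = dg 0"
      using dseq_const[OF n2 c] unfolding ds by simp_all
    have dd: "d1 = real (dg 0)" "d2 = real (dg 0)" unfolding d1_def d2_def e0 by simp_all
    have dd2: "d2 = d1" using dd by simp
    have "real (dg 0) \<le> F z" by (rule ones_eig[OF z]) (use c in blast)
    hence lo: "d1 \<le> F z" using dd(1) by simp
    have hi: "F z \<le> \<alpha> * d1 + (1-\<alpha>) * (d1 powr (1/k) * d2 powr (1 - 1/k))" using TV by blast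
    have "\<alpha> * d1 + (1-\<alpha>) * (d1 powr (1/k) * d2 powr (1 - 1/k)) = \<alpha> * d1 + (1-\<alpha>) * d1"
      unfolding dd2 same by simp
    also have "\<dots> = d1" by (simp add: algebra_simps)
    finally have B: "\<alpha> * d1 + (1-\<alpha>) * (d1 powr (1/k) * d2 powr (1 - 1/k)) = d1" .
    show "F z = \<alpha> * d1 + (1-\<alpha>) * (d1 powr (1/k) * d2 powr (1 - 1/k))"
      using lo hi unfolding B by simp
  qed
qed

end
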